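(* Let $\sigma,\lambda\in(0,1/3)$ and $r>0$. There exists $C = C(\lambda,\sigma)$ such that the following holds. Let $a_1,\dots,a_n$ be real numbers and suppose there are disjoint sets $I_1, I_2 \subseteq [n]$ with $|I_1|,|I_2|\ge\sigma n$ such that $|a_i - a_j|\ge r$ for all $i\in I_1$, $j\in I_2$. Then for every integer $m\in[\lambda n,(1-\lambda)n]$, \[\mathcal{L}\Big(\sum_{i=1}^n a_ib_i, r\Big) \le \frac{C}{\sqrt{n}},\] where $(b_1,\dots,b_n)$ is uniformly distributed on $\{0,1\}^n_m$.
   Context: $\{0,1\}^n_m$ is the set of vectors in $\{0,1\}^n$ with coordinate sum $m$. For a random variable $\xi$ and $r\ge0$, $\mathcal{L}(\xi,r)=\sup_{z\in\mathbb{R}}\mathbb{P}[|\xi-z|\le r]$. *)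

theory Defs
  imports "HOL-Probability.Probability"
begin

definition slice01 :: "nat \<Rightarrow> nat \<Rightarrow> (nat \<Rightarrow> real) set" where
  "slice01 n m = {b. (\<forall>i<n. b i = 0 \<or> b i = 1) \<and> (\<forall>i\<ge>n. b i = 0) \<and> (\<Sum>i<n. b i) = real m}"

definition levy_conc :: "real pmf \<Rightarrow> real \<Rightarrow> real" where
  "levy_conc p r = (SUP z. measure_pmf.prob p {x. \<bar>x - z\<bar> \<le> r})"

end

theory Submission
  imports Defs
begin

definition antichain :: "'a set set \<Rightarrow> bool" where
  "antichain F \<longleftrightarrow> (\<forall>A\<in>F. \<forall>B\<in>F. A \<subseteq> B \<longrightarrow> A = B)"

lemma LYM:
  assumes "finite Q" "F \<subseteq> Pow Q" "antichain F"
  shows "(\<Sum>A\<in>F. 1 / real (card Q choose card A)) \<le> 1"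
  using assms
proof (induction "card Q" arbitrary: Q F)
  case 0
  then have "Q = {}" by auto
  with 0 have "F \<subseteq> {{}}" by auto
  then have "F = {} \<or> F = {{}}" by auto
  then show ?case using \<open>Q = {}\<close> by auto
next
  case (Suc q Q F)
  have finF: "finite F" using Suc.prems by (meson finite_Pow_iff finite_subset)
  show ?case
  proof (cases "Q \<in> F")
    case True
    have "F = {Q}" using True Suc.prems(2,3) unfolding antichain_def by blast
    then show ?thesis by simp
  next
    case False
    have cardA: "card A < card Q" if "A \<in> F" for A
      using that False Suc.prems by (metis PowD psubsetI psubset_card_mono subsetD)
    have key: "real (card Q) * (1 / real (card Q choose card A))
        = (\<Sum>x\<in>Q - A. 1 / real ((card Q - 1) choose card A))" if "A \<in> F" for A
    proof -
      have AQ: "A \<subseteq> Q" using that Suc.prems by auto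
      have c: "card (Q - A) = card Q - card A" using AQ Suc.prems(1) by (simp add: card_Diff_subset finite_subset)
      have e: "real (card Q - card A) * real (card Q choose card A) = real (card Q) * real ((card Q - 1) choose card A)"
        using binomial_absorb_comp[of "card Q" "card A"] by (metis of_nat_mult)
      have p1: "card Q choose card A > 0" using cardA[OF that] by simp
      have p2: "(card Q - 1) choose card A > 0" using cardA[OF that] by simp
      show ?thesis using e p1 p2 c by (simp add: field_simps)
    qed
    have "real (card Q) * (\<Sum>A\<in>F. 1 / real (card Q choose card A))
        = (\<Sum>A\<in>F. \<Sum>x\<in>Q - A. 1 / real ((card Q - 1) choose card A))"
      unfolding sum_distrib_left by (rule sum.cong[OF refl], rule key)
    also have "\<dots> = (\<Sum>A\<in>F. \<Sum>x\<in>Q. if x \<notin> A then 1 / real ((card Q - 1) choose card A) else 0)"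
    proof (rule sum.cong[OF refl])
      fix A assume "A \<in> F"
      have "Q - A = {x\<in>Q. x \<notin> A}" by auto
      then show "(\<Sum>x\<in>Q - A. 1 / real ((card Q - 1) choose card A)) = (\<Sum>x\<in>Q. if x \<notin> A then 1 / real ((card Q - 1) choose card A) else 0)"
        using Suc.prems(1) by (simp add: sum.If_cases Diff_eq Compl_eq)
    qed
    also have "\<dots> = (\<Sum>x\<in>Q. \<Sum>A\<in>F. if x \<notin> A then 1 / real ((card Q - 1) choose card A) else 0)"
      by (rule sum.swap)
    also have "\<dots> = (\<Sum>x\<in>Q. \<Sum>A\<in>{A\<in>F. x \<notin> A}. 1 / real (card (Q - {x}) choose card A))"
    proof (rule sum.cong[OF refl])
      fix x assume "x \<in> Q"
      then have "card (Q - {x}) = card Q - 1" using Suc.prems(1) by simp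
      then show "(\<Sum>A\<in>F. if x \<notin> A then 1 / real ((card Q - 1) choose card A) else 0) = (\<Sum>A\<in>{A\<in>F. x \<notin> A}. 1 / real (card (Q - {x}) choose card A))"
        using finF by (simp add: sum.If_cases Collect_conj_eq)
    qed
    also have "\<dots> \<le> (\<Sum>x\<in>Q. 1)"
    proof (rule sum_mono)
      fix x assume "x \<in> Q"
      show "(\<Sum>A\<in>{A\<in>F. x \<notin> A}. 1 / real (card (Q - {x}) choose card A)) \<le> 1"
      proof (rule Suc.hyps)
        show "q = card (Q - {x})" using Suc.hyps(2) \<open>x\<in>Q\<close> Suc.prems(1) by simp
        show "finite (Q - {x})" using Suc.prems(1) by simp
        show "{A \<in> F. x \<notin> A} \<subseteq> Pow (Q - {x})" using Suc.prems(2) by auto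
        show "antichain {A \<in> F. x \<notin> A}" using Suc.prems(3) unfolding antichain_def by auto
      qed
    qed
    also have "\<dots> = real (card Q)" by simp
    finally show ?thesis using Suc.hyps(2) by simp
  qed
qed

lemma sperner:
  assumes "finite Q" "F \<subseteq> Pow Q" "antichain F"
  shows "card F \<le> card Q choose (card Q div 2)"
proof -
  have finF: "finite F" using assms by (meson finite_Pow_iff finite_subset)
  have pos: "real (card Q choose (card Q div 2)) > 0" by simp
  have "real (card F) = (\<Sum>A\<in>F. 1)" by simp
  also have "\<dots> \<le> (\<Sum>A\<in>F. real (card Q choose (card Q div 2)) / real (card Q choose card A))"
  proof (rule sum_mono)
    fix A assume "A \<in> F"
    then have "card A \<le> card Q" using assms by (meson PowD card_mono subsetD)
    then have p: "real (card Q choose card A) > 0" by simp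
    have "real (card Q choose card A) \<le> real (card Q choose (card Q div 2))"
      using binomial_maximum by simp
    then show "1 \<le> real (card Q choose (card Q div 2)) / real (card Q choose card A)"
      using p by simp
  qed
  also have "\<dots> = real (card Q choose (card Q div 2)) * (\<Sum>A\<in>F. 1 / real (card Q choose card A))"
    by (simp add: sum_distrib_left)
  also have "\<dots> \<le> real (card Q choose (card Q div 2)) * 1"
    using LYM[OF assms] pos by (intro mult_left_mono) auto
  finally show ?thesis by simp
qed

lemma aux_e1: "(c::real) > 0 \<Longrightarrow> t \<ge> 0 \<Longrightarrow> 2*x*(2*t+1)/(t+1)/(4*c) = x/c*(2*t+1)/(2*t+2)"
  by (simp add: divide_simps)

lemma central_even: "(real ((2*t) choose t) / 4^t)^2 * (2*t+1) \<le> 1"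
proof (induction t)
  case 0
  then show ?case by simp
next
  case (Suc t)
  have A: "(t+1) * ((2*t+1) choose (t+1)) = (2*t+1) * ((2*t) choose t)"
    using Suc_times_binomial[of t "2*t"] by simp
  have B: "(2*t+1) choose t = (2*t+1) choose (t+1)"
    using binomial_symmetric[of t "2*t+1"] by simp
  have C: "(t+1) * ((2*t+2) choose (t+1)) = (2*t+2) * ((2*t+1) choose t)"
    using Suc_times_binomial[of t "2*t+1"] by simp
  have C': "(2*t+2) choose (t+1) = 2 * ((2*t+1) choose t)"
  proof -
    have "(t+1) * ((2*t+2) choose (t+1)) = (t+1) * (2 * ((2*t+1) choose t))" using C by simp
    then show ?thesis by (metis add_is_0 mult_left_cancel one_neq_zero)
  qed
  have E: "real ((2*(Suc t)) choose (Suc t)) = 2 * real ((2*t) choose t) * (2*t+1) / (t+1)"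
  proof -
    have "real (t+1) * real ((2*t+1) choose (t+1)) = real (2*t+1) * real ((2*t) choose t)"
      using A by (metis of_nat_mult)
    then have "real ((2*t+1) choose (t+1)) = real (2*t+1) * real ((2*t) choose t) / real (t+1)"
      by (simp add: field_simps)
    note R1 = this
    have N: "(2*t+2) choose (t+1) = 2*((2*t+1) choose (t+1))" using C' B by (simp only:)
    have h1: "2*(t+1) = 2*t+2" by simp
    have h2: "Suc t = t+1" by simp
    have "real ((2*(Suc t)) choose (Suc t)) = real ((2*t+2) choose (t+1))" by (simp only: h2 h1)
    also have "\<dots> = real (2*((2*t+1) choose (t+1)))" by (simp only: N)
    also have "\<dots> = 2 * real ((2*t+1) choose (t+1))" by (simp only: of_nat_mult of_nat_numeral)
    also have "\<dots> = 2 * (real (2*t+1) * real ((2*t) choose t) / real (t+1))" by (simp only: R1)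
    finally show ?thesis by (simp add: field_simps)
  qed
  define e where "e = real ((2*t) choose t) / 4^t"
  have e1: "real ((2*(Suc t)) choose (Suc t)) / 4^(Suc t) = e * (2*t+1) / (2*t+2)"
    unfolding e_def E power_Suc using aux_e1[of "4^t" "real t" "real ((2*t) choose t)"] by (simp add: add.commute)
  have IH: "e^2 * (2*real t+1) \<le> 1" using Suc.IH unfolding e_def by (simp add: add.commute)
  have yp: "(2*real t+2) > 0" by simp
  have "(e * (2*real t+1) / (2*real t+2))^2 * (2 * real t + 3) = (e^2 * (2*real t+1)) * ((2*real t+1)*(2*real t+3)/(2*real t+2)^2)"
    using yp by (simp add: field_simps power2_eq_square)
  also have "\<dots> \<le> 1 * 1"
  proof (rule mult_mono)
    show "e^2 * (2*real t+1) \<le> 1" by (rule IH)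
    have "(2*real t+1)*(2*real t+3) \<le> (2*real t+2)^2" by (simp add: power2_eq_square algebra_simps)
    then show "(2*real t+1)*(2*real t+3)/(2*real t+2)^2 \<le> 1" by simp
  qed auto
  finally have "(e * (2*real t+1) / (2*real t+2))^2 * (2 * real t + 3) \<le> 1" by simp
  moreover have "real ((2*(Suc t)) choose (Suc t)) / 4^(Suc t) = e * (2*real t+1) / (2*real t+2)"
    using e1 by (simp only: of_nat_add of_nat_mult of_nat_numeral of_nat_1)
  ultimately show ?case by (simp add: add.commute)
qed

lemma aux_sq: "(y::real) > 0 \<Longrightarrow> (e*a/y)^2*y = (e^2*a)*(a/y)"
  by (simp add: power2_eq_square field_simps)

lemma central_odd: "(real ((2*t+1) choose t) / 2^(2*t+1))^2 * (2*t+2) \<le> 1"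
proof -
  have A: "(t+1) * ((2*t+1) choose (t+1)) = (2*t+1) * ((2*t) choose t)"
    using Suc_times_binomial[of t "2*t"] by simp
  have B: "(2*t+1) choose t = (2*t+1) choose (t+1)"
    using binomial_symmetric[of t "2*t+1"] by simp
  define e where "e = real ((2*t) choose t) / 4^t"
  have "real (t+1) * real ((2*t+1) choose (t+1)) = real (2*t+1) * real ((2*t) choose t)"
    using A by (metis of_nat_mult)
  then have X: "real ((2*t+1) choose t) = real (2*t+1) * real ((2*t) choose t) / real (t+1)"
    using B by (simp add: field_simps)
  have p: "(2::real)^(2*t+1) = 2 * 4^t" by (simp add: power_mult)
  have e1: "real ((2*t+1) choose t) / 2^(2*t+1) = e * (2*t+1) / (2*t+2)"
    unfolding X e_def p by (simp add: field_simps)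
  have IH: "e^2 * (2*t+1) \<le> 1" using central_even[of t] unfolding e_def by simp
  have yp: "real (2*t+2) > 0" by simp
  have "(e * (2*t+1) / (2*t+2))^2 * (2*t+2) = (e^2 * (2*t+1)) * ((2*t+1)/(2*t+2))"
    by (rule aux_sq[OF yp])
  also have "\<dots> \<le> 1 * 1"
    by (rule mult_mono) (use IH in auto)
  finally show ?thesis using e1 by simp
qed

lemma central: "(real (q choose (q div 2)) / 2^q)^2 * (q+1) \<le> 1"
proof (cases "even q")
  case True
  then obtain t where q: "q = 2*t" by auto
  have "(2::real)^(2*t) = 4^t" by (simp add: power_mult)
  then show ?thesis using central_even[of t] q by simp
next
  case False
  then obtain t where q: "q = 2*t+1" using oddE by blast
  have "q div 2 = t" using q by simp
  then show ?thesis using central_odd[of t] q by (simp add: add.commute)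
qed

lemma central_sqrt: "real (q choose (q div 2)) / 2^q \<le> 1 / sqrt (q+1)"
proof -
  define x where "x = real (q choose (q div 2)) / 2^q"
  have x0: "x \<ge> 0" unfolding x_def by simp
  have "x^2 * (q+1) \<le> 1" unfolding x_def using central by simp
  then have "(x * sqrt (q+1))^2 \<le> 1" by (simp add: power_mult_distrib)
  then have "x * sqrt (q+1) \<le> 1" using x0
    by (metis abs_le_square_iff abs_of_nonneg mult_nonneg_nonneg one_power2 real_sqrt_ge_zero abs_one of_nat_0_le_iff add_nonneg_nonneg zero_le_one)
  then show ?thesis unfolding x_def[symmetric] by (simp add: field_simps)
qed

lemma antichain_window:
  fixes e :: "'a \<Rightarrow> real"
  assumes "finite Q" "\<forall>i\<in>Q. e i \<ge> r" "r > 0"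
  shows "antichain {T. T \<subseteq> Q \<and> w \<le> c + sum e T \<and> c + sum e T < w + r}"
  unfolding antichain_def
proof (intro ballI impI)
  fix A B assume A: "A \<in> {T. T \<subseteq> Q \<and> w \<le> c + sum e T \<and> c + sum e T < w + r}"
    and B: "B \<in> {T. T \<subseteq> Q \<and> w \<le> c + sum e T \<and> c + sum e T < w + r}" and AB: "A \<subseteq> B"
  show "A = B"
  proof (rule ccontr)
    assume "A \<noteq> B"
    then obtain x where x: "x \<in> B" "x \<notin> A" using AB by blast
    have finB: "finite B" using B assms(1) finite_subset by blast
    have BQ: "B \<subseteq> Q" using B by simp
    have nn: "\<forall>i\<in>B - A. e i \<ge> 0" using BQ assms(2,3) by force
    have "sum e B = sum e A + sum e (B - A)"
      using finB AB by (metis add.commute sum.subset_diff)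
    moreover have "sum e (B - A) \<ge> e x"
      using finB x nn by (intro member_le_sum) auto
    moreover have "e x \<ge> r" using x BQ assms(2) by auto
    ultimately have "sum e B \<ge> sum e A + r" by linarith
    then show False using A B by auto
  qed
qed

lemma LO_cube:
  fixes d :: "'a \<Rightarrow> real"
  assumes fin: "finite Q" and r: "r > 0" and dr: "\<forall>i\<in>Q. \<bar>d i\<bar> \<ge> r"
  shows "card {T. T \<subseteq> Q \<and> \<bar>c + sum d T - z\<bar> \<le> r} \<le> 3 * (card Q choose (card Q div 2))"
proof -
  define N where "N = {i\<in>Q. d i < 0}"
  define e where "e = (\<lambda>i. \<bar>d i\<bar>)"
  define h where "h = (\<lambda>T. (T - N) \<union> (N - T))"
  define c' where "c' = c - sum e N"
  have finN: "finite N" using fin unfolding N_def by simp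
  have hh: "h (h T) = T" for T unfolding h_def by auto
  have injh: "inj_on h X" for X by (metis hh inj_on_inverseI)
  have sumid: "sum d T = sum e (h T) - sum e N" if TQ: "T \<subseteq> Q" for T
  proof -
    have finT: "finite T" using TQ fin finite_subset by blast
    have s1: "sum d T = sum d (T - N) + sum d (T \<inter> N)"
      using finT by (metis add.commute sum.Int_Diff)
    have s2: "sum d (T - N) = sum e (T - N)"
      unfolding e_def N_def using TQ by (intro sum.cong) auto
    have s3: "sum d (T \<inter> N) = - sum e (T \<inter> N)"
      unfolding e_def N_def by (simp add: sum_negf[symmetric])
    have s4: "sum e (h T) = sum e (T - N) + sum e (N - T)"
      unfolding h_def using finT finN by (intro sum.union_disjoint) auto
    have s5: "sum e N = sum e (N \<inter> T) + sum e (N - T)"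
      using finN by (metis sum.Int_Diff)
    have "N \<inter> T = T \<inter> N" by auto
    then show ?thesis using s1 s2 s3 s4 s5 by simp
  qed
  define G where "G = {T. T \<subseteq> Q \<and> \<bar>c + sum d T - z\<bar> \<le> r}"
  define W where "W = (\<lambda>w. {T. T \<subseteq> Q \<and> w \<le> c' + sum e T \<and> c' + sum e T < w + r})"
  have hQ: "h T \<subseteq> Q" if "T \<subseteq> Q" for T using that unfolding h_def N_def by auto
  have sub: "h ` G \<subseteq> W (z - r) \<union> W z \<union> W (z + r)"
  proof
    fix T' assume "T' \<in> h ` G"
    then obtain T where T: "T \<in> G" "T' = h T" by blast
    have TQ: "T \<subseteq> Q" using T unfolding G_def by simp
    have v: "c' + sum e T' = c + sum d T" unfolding c'_def T(2) using sumid[OF TQ] by simp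
    have "\<bar>c + sum d T - z\<bar> \<le> r" using T unfolding G_def by simp
    then show "T' \<in> W (z - r) \<union> W z \<union> W (z + r)"
      unfolding W_def using v hQ[OF TQ] T(2) r by auto
  qed
  have eQ: "\<forall>i\<in>Q. e i \<ge> r" using dr unfolding e_def by simp
  have cW: "card (W w) \<le> card Q choose (card Q div 2)" for w
    unfolding W_def by (rule sperner[OF fin _ antichain_window[OF fin eQ r]]) auto
  have finW: "finite (W w)" for w unfolding W_def using fin by simp
  have "card G = card (h ` G)" using injh by (simp add: card_image)
  also have "\<dots> \<le> card (W (z - r) \<union> W z \<union> W (z + r))"
    using sub finW by (intro card_mono) auto
  also have "\<dots> \<le> card (W (z - r)) + card (W z) + card (W (z + r))"
    by (meson add_le_mono card_Un_le le_refl order_trans)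
  also have "\<dots> \<le> 3 * (card Q choose (card Q div 2))" using cW[of "z-r"] cW[of z] cW[of "z+r"] by linarith
  finally show ?thesis unfolding G_def .
qed

definition Sm :: "nat \<Rightarrow> nat \<Rightarrow> nat set set" where
  "Sm n m = {S. S \<subseteq> {..<n} \<and> card S = m}"

locale pairs =
  fixes n k :: nat and u v :: "nat \<Rightarrow> nat"
  assumes inju: "inj_on u {..<k}" and injv: "inj_on v {..<k}"
    and disj: "u ` {..<k} \<inter> v ` {..<k} = {}"
    and un: "u ` {..<k} \<subseteq> {..<n}" and vn: "v ` {..<k} \<subseteq> {..<n}"
begin

definition Qs :: "nat set \<Rightarrow> nat set" where
  "Qs S = {i. i < k \<and> (u i \<in> S) \<noteq> (v i \<in> S)}"
definition cbase :: "nat set \<Rightarrow> nat set" where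
  "cbase S = S - (u ` Qs S \<union> v ` Qs S)"
definition cbuild :: "nat set \<Rightarrow> nat set \<Rightarrow> nat set" where
  "cbuild S T = cbase S \<union> v ` T \<union> u ` (Qs S - T)"
definition cube :: "nat set \<Rightarrow> nat set set" where
  "cube S = cbuild S ` Pow (Qs S)"

lemma Qs_k: "Qs S \<subseteq> {..<k}" unfolding Qs_def by auto

lemma uv_ne: "i < k \<Longrightarrow> j < k \<Longrightarrow> u i \<noteq> v j"
  using disj by auto

lemma u_eq: "i < k \<Longrightarrow> j < k \<Longrightarrow> u i = u j \<longleftrightarrow> i = j"
  using inju by (meson inj_on_contraD lessThan_iff)
lemma v_eq: "i < k \<Longrightarrow> j < k \<Longrightarrow> v i = v j \<longleftrightarrow> i = j"
  using injv by (meson inj_on_contraD lessThan_iff)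

lemma mem_build_u:
  assumes "T \<subseteq> Qs S" "i < k"
  shows "u i \<in> cbuild S T \<longleftrightarrow> (if i \<in> Qs S then i \<notin> T else u i \<in> S)"
  using assms Qs_k unfolding cbuild_def cbase_def
  by (auto simp: u_eq uv_ne uv_ne[symmetric] subset_iff)

lemma mem_build_v:
  assumes "T \<subseteq> Qs S" "i < k"
  shows "v i \<in> cbuild S T \<longleftrightarrow> (if i \<in> Qs S then i \<in> T else v i \<in> S)"
  using assms Qs_k unfolding cbuild_def cbase_def
  by (auto simp: v_eq uv_ne uv_ne[symmetric] subset_iff)

lemma Qs_build: "T \<subseteq> Qs S \<Longrightarrow> Qs (cbuild S T) = Qs S"
proof -
  assume T: "T \<subseteq> Qs S"
  show ?thesis
  proof (rule set_eqI)
    fix i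
    show "i \<in> Qs (cbuild S T) \<longleftrightarrow> i \<in> Qs S"
    proof (cases "i < k")
      case True
      then show ?thesis using mem_build_u[OF T True] mem_build_v[OF T True]
        unfolding Qs_def by (cases "i \<in> Qs S") (auto simp: Qs_def)
    next
      case False
      then show ?thesis unfolding Qs_def by auto
    qed
  qed
qed

lemma base_build: "T \<subseteq> Qs S \<Longrightarrow> cbase (cbuild S T) = cbase S"
  using Qs_build[of T S] unfolding cbase_def
  by (simp add: cbuild_def cbase_def) blast

lemma build_build: "T \<subseteq> Qs S \<Longrightarrow> cbuild (cbuild S T) T' = cbuild S T'"
  unfolding cbuild_def[of "cbuild S T"] using base_build Qs_build
  by (simp add: cbuild_def)

lemma cube_build: "T \<subseteq> Qs S \<Longrightarrow> cube (cbuild S T) = cube S"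
  unfolding cube_def using Qs_build build_build by simp

lemma build_self: "cbuild S {i \<in> Qs S. v i \<in> S} = S"
proof -
  define T where "T = {i \<in> Qs S. v i \<in> S}"
  have "cbuild S T \<subseteq> S"
  proof
    fix x assume "x \<in> cbuild S T"
    then consider "x \<in> cbase S" | "x \<in> v ` T" | "x \<in> u ` (Qs S - T)"
      unfolding cbuild_def by blast
    then show "x \<in> S"
    proof cases
      case 1 then show ?thesis unfolding cbase_def by blast
    next
      case 2 then show ?thesis unfolding T_def by blast
    next
      case 3
      then obtain i where i: "i \<in> Qs S" "i \<notin> T" "x = u i" by blast
      then have "v i \<notin> S" unfolding T_def by blast
      then show ?thesis using i unfolding Qs_def by blast
    qed
  qed
  moreover have "S \<subseteq> cbuild S T"
  proof
    fix x assume xS: "x \<in> S"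
    show "x \<in> cbuild S T"
    proof (cases "x \<in> u ` Qs S")
      case True
      then obtain i where i: "i \<in> Qs S" "x = u i" by blast
      then have "v i \<notin> S" using xS unfolding Qs_def by blast
      then have "i \<notin> T" unfolding T_def by blast
      then show ?thesis using i unfolding cbuild_def by blast
    next
      case False
      show ?thesis
      proof (cases "x \<in> v ` Qs S")
        case True
        then obtain i where i: "i \<in> Qs S" "x = v i" by blast
        then have "i \<in> T" using xS unfolding T_def by blast
        then show ?thesis using i unfolding cbuild_def by blast
      next
        case False2: False
        then have "x \<in> cbase S" using False xS unfolding cbase_def by blast
        then show ?thesis unfolding cbuild_def by blast
      qed
    qed
  qed
  ultimately show ?thesis unfolding T_def by blast
qed

lemma self_in_cube: "S \<in> cube S"
proof -
  have e: "S = cbuild S {i \<in> Qs S. v i \<in> S}" using build_self[of S] by simp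
  have p: "{i \<in> Qs S. v i \<in> S} \<in> Pow (Qs S)" by blast
  show ?thesis unfolding cube_def using image_eqI[where f="cbuild S", OF e p] .
qed

lemma build_inj: "inj_on (cbuild S) (Pow (Qs S))"
proof (rule inj_onI)
  fix T1 T2 assume T1: "T1 \<in> Pow (Qs S)" and T2: "T2 \<in> Pow (Qs S)" and eq: "cbuild S T1 = cbuild S T2"
  have "i \<in> T1 \<longleftrightarrow> i \<in> T2" for i
  proof (cases "i \<in> Qs S")
    case True
    then have ik: "i < k" using Qs_k by auto
    show ?thesis using mem_build_v[of T1 S i] mem_build_v[of T2 S i] T1 T2 True ik eq by auto
  next
    case False
    then show ?thesis using T1 T2 by auto
  qed
  then show "T1 = T2" by auto
qed

lemma card_cube: "card (cube S) = 2 ^ card (Qs S)"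
proof -
  have "finite (Qs S)" using Qs_k finite_subset by blast
  then show ?thesis unfolding cube_def by (simp add: card_image[OF build_inj] card_Pow)
qed

lemma finite_cube: "finite (cube S)"
proof -
  have "finite (Qs S)" using Qs_k finite_subset by blast
  then show ?thesis unfolding cube_def by simp
qed

lemma card_build:
  assumes T: "T \<subseteq> Qs S" and fS: "finite S"
  shows "card (cbuild S T) = card (cbase S) + card (Qs S)"
proof -
  have fQ: "finite (Qs S)" using finite_subset[OF Qs_k] by blast
  have Tk: "T \<subseteq> {..<k}" using T Qs_k by (rule order_trans)
  have fT: "finite T" using finite_subset[OF T fQ] .
  have fb: "finite (cbase S)" using fS unfolding cbase_def by (rule finite_Diff)
  have fR: "finite (v ` T \<union> u ` (Qs S - T))" using fT fQ by simp
  have sub: "v ` T \<union> u ` (Qs S - T) \<subseteq> u ` Qs S \<union> v ` Qs S" using T by blast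
  have d1: "cbase S \<inter> (v ` T \<union> u ` (Qs S - T)) = {}"
    unfolding cbase_def using sub by blast
  have d2: "v ` T \<inter> u ` (Qs S - T) = {}"
  proof -
    { fix i j assume ij: "i \<in> T" "j \<in> Qs S - T" "v i = u j"
      have "i < k" using ij(1) Tk by blast
      moreover have "j < k" using ij(2) Qs_k by blast
      ultimately have False using uv_ne[of j i] ij(3) by simp }
    then show ?thesis by blast
  qed
  have split: "cbuild S T = cbase S \<union> (v ` T \<union> u ` (Qs S - T))"
    unfolding cbuild_def by (simp only: Un_assoc)
  have ivT: "inj_on v T" using inj_on_subset[OF injv Tk] .
  have iuQ: "inj_on u (Qs S - T)" using inj_on_subset[OF inju] Qs_k by blast
  have c1: "card (v ` T) = card T" using card_image[OF ivT] .
  have c2: "card (u ` (Qs S - T)) = card (Qs S - T)" using card_image[OF iuQ] .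
  have c3: "card (Qs S - T) = card (Qs S) - card T" using card_Diff_subset[OF fT T] .
  have c4: "card T \<le> card (Qs S)" using card_mono[OF fQ T] .
  have "card (cbuild S T) = card (cbase S) + card (v ` T \<union> u ` (Qs S - T))"
    unfolding split using card_Un_disjoint[OF fb fR d1] .
  also have "card (v ` T \<union> u ` (Qs S - T)) = card (v ` T) + card (u ` (Qs S - T))"
    using card_Un_disjoint[OF _ _ d2] fT fQ by simp
  finally show ?thesis using c1 c2 c3 c4 by simp
qed

lemma build_Sm:
  assumes S: "S \<in> Sm n m" and T: "T \<subseteq> Qs S"
  shows "cbuild S T \<in> Sm n m"
proof -
  have fS: "finite S" using S unfolding Sm_def by (auto intro: finite_subset)
  have sub: "cbuild S T \<subseteq> {..<n}"
    using S T Qs_k un vn unfolding Sm_def cbuild_def cbase_def by blast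
  have "card (cbuild S T) = card (cbuild S {i \<in> Qs S. v i \<in> S})"
    using card_build[OF T fS] card_build[of "{i \<in> Qs S. v i \<in> S}" S] fS by simp
  also have "\<dots> = m" using build_self S unfolding Sm_def by simp
  finally show ?thesis using sub unfolding Sm_def by simp
qed

lemma cube_Sm: "S \<in> Sm n m \<Longrightarrow> cube S \<subseteq> Sm n m"
  unfolding cube_def using build_Sm by auto

lemma sum_build:
  fixes a :: "nat \<Rightarrow> real"
  assumes T: "T \<subseteq> Qs S" and fS: "finite S"
  shows "sum a (cbuild S T) = (sum a (cbase S) + (\<Sum>i\<in>Qs S. a (u i))) + (\<Sum>i\<in>T. a (v i) - a (u i))"
proof -
  have fQ: "finite (Qs S)" using finite_subset[OF Qs_k] by blast
  have Tk: "T \<subseteq> {..<k}" using T Qs_k by (rule order_trans)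
  have fT: "finite T" using finite_subset[OF T fQ] .
  have fb: "finite (cbase S)" using fS unfolding cbase_def by (rule finite_Diff)
  have fR: "finite (v ` T \<union> u ` (Qs S - T))" using fT fQ by simp
  have sub: "v ` T \<union> u ` (Qs S - T) \<subseteq> u ` Qs S \<union> v ` Qs S" using T by blast
  have d1: "cbase S \<inter> (v ` T \<union> u ` (Qs S - T)) = {}"
    unfolding cbase_def using sub by blast
  have d2: "v ` T \<inter> u ` (Qs S - T) = {}"
  proof -
    { fix i j assume ij: "i \<in> T" "j \<in> Qs S - T" "v i = u j"
      have "i < k" using ij(1) Tk by blast
      moreover have "j < k" using ij(2) Qs_k by blast
      ultimately have False using uv_ne[of j i] ij(3) by simp }
    then show ?thesis by blast
  qed
  have split: "cbuild S T = cbase S \<union> (v ` T \<union> u ` (Qs S - T))"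
    unfolding cbuild_def by (simp only: Un_assoc)
  have ivT: "inj_on v T" using inj_on_subset[OF injv Tk] .
  have iuQ: "inj_on u (Qs S - T)" using inj_on_subset[OF inju] Qs_k by blast
  have s1: "sum a (v ` T) = (\<Sum>i\<in>T. a (v i))" using sum.reindex[OF ivT] by simp
  have s2: "sum a (u ` (Qs S - T)) = (\<Sum>i\<in>Qs S - T. a (u i))" using sum.reindex[OF iuQ] by simp
  have s3: "(\<Sum>i\<in>Qs S. a (u i)) = (\<Sum>i\<in>Qs S - T. a (u i)) + (\<Sum>i\<in>T. a (u i))"
    using sum.subset_diff[OF T fQ] .
  have "sum a (cbuild S T) = sum a (cbase S) + sum a (v ` T \<union> u ` (Qs S - T))"
    unfolding split using sum.union_disjoint[OF fb fR d1] .
  also have "sum a (v ` T \<union> u ` (Qs S - T)) = sum a (v ` T) + sum a (u ` (Qs S - T))"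
    using sum.union_disjoint[OF _ _ d2] fT fQ by simp
  finally show ?thesis using s1 s2 s3 by (simp add: sum_subtractf)
qed

end

lemma finite_Sm: "finite (Sm n m)"
proof -
  have "Sm n m \<subseteq> Pow {..<n}" unfolding Sm_def by auto
  then show ?thesis by (rule finite_subset) simp
qed

context pairs
begin

lemma cube_sym: "S' \<in> cube S \<Longrightarrow> cube S' = cube S"
proof -
  assume "S' \<in> cube S"
  then obtain T where "T \<subseteq> Qs S" "S' = cbuild S T" unfolding cube_def by blast
  then show ?thesis using cube_build by simp
qed

lemma double_count:
  assumes FS: "F \<subseteq> Sm n m"
  shows "real (card F) = (\<Sum>S\<in>Sm n m. real (card (F \<inter> cube S)) / real (card (cube S)))"
proof -
  have finF: "finite F" using finite_subset[OF FS finite_Sm] .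
  have pos: "real (card (cube S)) > 0" for S
    using finite_cube self_in_cube by (metis card_gt_0_iff empty_iff of_nat_0_less_iff)
  have "(\<Sum>S\<in>Sm n m. real (card (F \<inter> cube S)) / real (card (cube S)))
      = (\<Sum>S\<in>Sm n m. \<Sum>S'\<in>F. if S' \<in> cube S then 1 / real (card (cube S)) else 0)"
  proof (rule sum.cong[OF refl])
    fix S
    have "(\<Sum>S'\<in>F. if S' \<in> cube S then 1 / real (card (cube S)) else 0)
        = (\<Sum>S'\<in>F \<inter> cube S. 1 / real (card (cube S)))"
      using finF by (simp add: sum.If_cases Int_def)
    also have "\<dots> = real (card (F \<inter> cube S)) / real (card (cube S))" by simp
    finally show "real (card (F \<inter> cube S)) / real (card (cube S)) = (\<Sum>S'\<in>F. if S' \<in> cube S then 1 / real (card (cube S)) else 0)" by simp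
  qed
  also have "\<dots> = (\<Sum>S'\<in>F. \<Sum>S\<in>Sm n m. if S' \<in> cube S then 1 / real (card (cube S)) else 0)"
    by (rule sum.swap)
  also have "\<dots> = (\<Sum>S'\<in>F. 1)"
  proof (rule sum.cong[OF refl])
    fix S' assume S'F: "S' \<in> F"
    then have S'S: "S' \<in> Sm n m" using FS by blast
    have "(\<Sum>S\<in>Sm n m. if S' \<in> cube S then 1 / real (card (cube S)) else 0)
        = (\<Sum>S\<in>Sm n m. if S \<in> cube S' then 1 / real (card (cube S')) else 0)"
    proof (rule sum.cong[OF refl])
      fix S assume "S \<in> Sm n m"
      show "(if S' \<in> cube S then 1 / real (card (cube S)) else 0) = (if S \<in> cube S' then 1 / real (card (cube S')) else 0)"
      proof (cases "S' \<in> cube S")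
        case True
        then have "cube S' = cube S" by (rule cube_sym)
        then show ?thesis using True self_in_cube[of S] by simp
      next
        case False
        have "S \<notin> cube S'"
        proof
          assume "S \<in> cube S'"
          then have "cube S = cube S'" by (rule cube_sym)
          then show False using False self_in_cube[of S'] by simp
        qed
        then show ?thesis using False by simp
      qed
    qed
    also have "\<dots> = (\<Sum>S\<in>Sm n m \<inter> cube S'. 1 / real (card (cube S')))"
      using finite_Sm by (simp add: sum.If_cases Int_def)
    also have "Sm n m \<inter> cube S' = cube S'" using cube_Sm[OF S'S] by blast
    also have "(\<Sum>S\<in>cube S'. 1 / real (card (cube S'))) = 1" using pos[of S'] by simp
    finally show "(\<Sum>S\<in>Sm n m. if S' \<in> cube S then 1 / real (card (cube S)) else 0) = 1" .
  qed
  also have "\<dots> = real (card F)" by simp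
  finally show ?thesis by simp
qed

lemma F_bound:
  fixes a :: "nat \<Rightarrow> real"
  assumes dr: "\<forall>i<k. \<bar>a (v i) - a (u i)\<bar> \<ge> r" and r: "r > 0"
  shows "real (card {S\<in>Sm n m. \<bar>sum a S - z\<bar> \<le> r})
    \<le> (\<Sum>S\<in>Sm n m. 3 * real (card (Qs S) choose (card (Qs S) div 2)) / 2 ^ card (Qs S))"
proof -
  define F where "F = {S\<in>Sm n m. \<bar>sum a S - z\<bar> \<le> r}"
  have FS: "F \<subseteq> Sm n m" unfolding F_def by blast
  have "real (card F) = (\<Sum>S\<in>Sm n m. real (card (F \<inter> cube S)) / real (card (cube S)))"
    by (rule double_count[OF FS])
  also have "\<dots> \<le> (\<Sum>S\<in>Sm n m. 3 * real (card (Qs S) choose (card (Qs S) div 2)) / 2 ^ card (Qs S))"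
  proof (rule sum_mono)
    fix S assume SS: "S \<in> Sm n m"
    have fS: "finite S" using SS unfolding Sm_def by (auto intro: finite_subset)
    have fQ: "finite (Qs S)" using finite_subset[OF Qs_k] by blast
    define c where "c = sum a (cbase S) + (\<Sum>i\<in>Qs S. a (u i))"
    define d where "d = (\<lambda>i. a (v i) - a (u i))"
    have sub: "F \<inter> cube S \<subseteq> cbuild S ` {T. T \<subseteq> Qs S \<and> \<bar>c + sum d T - z\<bar> \<le> r}"
    proof
      fix S' assume "S' \<in> F \<inter> cube S"
      then obtain T where T: "T \<subseteq> Qs S" "S' = cbuild S T" and S'F: "S' \<in> F" unfolding cube_def by blast
      have "sum a S' = c + sum d T" unfolding T(2) c_def d_def using sum_build[OF T(1) fS] .
      then show "S' \<in> cbuild S ` {T. T \<subseteq> Qs S \<and> \<bar>c + sum d T - z\<bar> \<le> r}"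
        using S'F T unfolding F_def by auto
    qed
    have dQ: "\<forall>i\<in>Qs S. \<bar>d i\<bar> \<ge> r" using dr Qs_k unfolding d_def by blast
    have "card (F \<inter> cube S) \<le> card (cbuild S ` {T. T \<subseteq> Qs S \<and> \<bar>c + sum d T - z\<bar> \<le> r})"
      using sub by (intro card_mono) (auto simp: fQ)
    also have "\<dots> \<le> card {T. T \<subseteq> Qs S \<and> \<bar>c + sum d T - z\<bar> \<le> r}" by (rule card_image_le) (simp add: fQ)
    also have "\<dots> \<le> 3 * (card (Qs S) choose (card (Qs S) div 2))" by (rule LO_cube[OF fQ r dQ])
    finally have "real (card (F \<inter> cube S)) \<le> 3 * real (card (Qs S) choose (card (Qs S) div 2))"
      by (metis of_nat_le_iff of_nat_mult of_nat_numeral)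
    then show "real (card (F \<inter> cube S)) / real (card (cube S)) \<le> 3 * real (card (Qs S) choose (card (Qs S) div 2)) / 2 ^ card (Qs S)"
      unfolding card_cube by (simp add: divide_right_mono)
  qed
  finally show ?thesis unfolding F_def .
qed

end

lemma count_AB:
  assumes A: "A \<subseteq> {..<n}" and B: "B \<subseteq> {..<n}" and AB: "A \<inter> B = {}" and Am: "card A \<le> m"
  shows "card {S\<in>Sm n m. A \<subseteq> S \<and> S \<inter> B = {}} = (n - card A - card B) choose (m - card A)"
proof -
  define X where "X = {S\<in>Sm n m. A \<subseteq> S \<and> S \<inter> B = {}}"
  define U where "U = {..<n} - A - B"
  define Y where "Y = {R. R \<subseteq> U \<and> card R = m - card A}"
  have fA: "finite A" using A finite_subset by blast
  have fB: "finite B" using B finite_subset by blast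
  have bij: "bij_betw (\<lambda>S. S - A) X Y"
  proof (rule bij_betw_byWitness[where f' = "\<lambda>R. R \<union> A"])
    show "\<forall>S\<in>X. S - A \<union> A = S" unfolding X_def by blast
    show "\<forall>R\<in>Y. R \<union> A - A = R" unfolding Y_def U_def by blast
    show "(\<lambda>S. S - A) ` X \<subseteq> Y"
    proof
      fix R assume "R \<in> (\<lambda>S. S - A) ` X"
      then obtain S where S: "S \<in> X" "R = S - A" by blast
      have fS: "finite S" using S(1) unfolding X_def Sm_def by (auto intro: finite_subset)
      have "card R = m - card A" using S unfolding X_def Sm_def by (simp add: card_Diff_subset fA)
      moreover have "R \<subseteq> U" using S unfolding X_def Sm_def U_def by blast
      ultimately show "R \<in> Y" unfolding Y_def by blast
    qed
    show "(\<lambda>R. R \<union> A) ` Y \<subseteq> X"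
    proof
      fix S assume "S \<in> (\<lambda>R. R \<union> A) ` Y"
      then obtain R where R: "R \<in> Y" "S = R \<union> A" by blast
      have fR: "finite R" using R(1) unfolding Y_def U_def by (auto intro: finite_subset)
      have "R \<inter> A = {}" using R(1) unfolding Y_def U_def by blast
      then have "card S = card R + card A" using R(2) fR fA by (simp add: card_Un_disjoint)
      then have "card S = m" using R(1) Am unfolding Y_def by simp
      moreover have "S \<subseteq> {..<n}" using R A unfolding Y_def U_def by blast
      moreover have "A \<subseteq> S \<and> S \<inter> B = {}" using R AB unfolding Y_def U_def by blast
      ultimately show "S \<in> X" unfolding X_def Sm_def by blast
    qed
  qed
  have "card X = card Y" using bij_betw_same_card[OF bij] .
  also have "card Y = card U choose (m - card A)" unfolding Y_def by (rule n_subsets) (simp add: U_def)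
  also have "card U = n - card A - card B"
  proof -
    have "card ({..<n} - A) = n - card A" using A fA by (simp add: card_Diff_subset)
    moreover have "B \<subseteq> {..<n} - A" using B AB by blast
    ultimately show ?thesis unfolding U_def using fB by (simp add: card_Diff_subset)
  qed
  finally show ?thesis unfolding X_def .
qed

context pairs
begin

definition q1 :: "nat set \<Rightarrow> nat" where
  "q1 S = card {i. i < k \<and> u i \<in> S \<and> v i \<notin> S}"

lemma q1_le: "q1 S \<le> card (Qs S)"
  unfolding q1_def Qs_def by (rule card_mono) auto

lemma q1_sum_ind: "real (q1 S) = (\<Sum>i<k. if u i \<in> S \<and> v i \<notin> S then 1 else 0)"
proof -
  have "{i. i < k \<and> u i \<in> S \<and> v i \<notin> S} = {i\<in>{..<k}. u i \<in> S \<and> v i \<notin> S}" by auto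
  then show ?thesis unfolding q1_def by (simp add: sum.If_cases Int_def)
qed

lemma count1:
  assumes "i < k" "1 \<le> m"
  shows "card {S\<in>Sm n m. u i \<in> S \<and> v i \<notin> S} = (n - 2) choose (m - 1)"
proof -
  have e: "{S\<in>Sm n m. u i \<in> S \<and> v i \<notin> S} = {S\<in>Sm n m. {u i} \<subseteq> S \<and> S \<inter> {v i} = {}}" by auto
  have "u i \<noteq> v i" using uv_ne assms by blast
  moreover have "u i < n" "v i < n" using un vn assms by auto
  ultimately show ?thesis unfolding e using count_AB[of "{u i}" n "{v i}" m] assms by (simp add: numeral_2_eq_2)
qed

lemma count2:
  assumes "i < k" "j < k" "i \<noteq> j" "2 \<le> m"
  shows "card {S\<in>Sm n m. (u i \<in> S \<and> v i \<notin> S) \<and> (u j \<in> S \<and> v j \<notin> S)} = (n - 4) choose (m - 2)"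
proof -
  have e: "{S\<in>Sm n m. (u i \<in> S \<and> v i \<notin> S) \<and> (u j \<in> S \<and> v j \<notin> S)} = {S\<in>Sm n m. {u i, u j} \<subseteq> S \<and> S \<inter> {v i, v j} = {}}" by auto
  have c1: "card {u i, u j} = 2" using u_eq assms by simp
  have c2: "card {v i, v j} = 2" using v_eq assms by simp
  have d: "{u i, u j} \<inter> {v i, v j} = {}" using uv_ne assms by blast
  have s: "{u i, u j} \<subseteq> {..<n}" "{v i, v j} \<subseteq> {..<n}" using un vn assms by auto
  have "n - 2 - 2 = n - 4" by simp
  then show ?thesis unfolding e using count_AB[OF s d] c1 c2 assms by simp
qed

lemma sum_q1:
  assumes "1 \<le> m"
  shows "(\<Sum>S\<in>Sm n m. real (q1 S)) = real k * real ((n - 2) choose (m - 1))"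
proof -
  have "(\<Sum>S\<in>Sm n m. real (q1 S)) = (\<Sum>S\<in>Sm n m. \<Sum>i<k. if u i \<in> S \<and> v i \<notin> S then 1 else 0)"
    by (simp add: q1_sum_ind)
  also have "\<dots> = (\<Sum>i<k. \<Sum>S\<in>Sm n m. if u i \<in> S \<and> v i \<notin> S then 1 else 0)" by (rule sum.swap)
  also have "\<dots> = (\<Sum>i<k. real ((n - 2) choose (m - 1)))"
  proof (rule sum.cong[OF refl])
    fix i assume "i \<in> {..<k}"
    then have "card {S\<in>Sm n m. u i \<in> S \<and> v i \<notin> S} = (n - 2) choose (m - 1)" using count1 assms by simp
    then show "(\<Sum>S\<in>Sm n m. if u i \<in> S \<and> v i \<notin> S then 1 else 0) = real ((n - 2) choose (m - 1))"
      using finite_Sm by (simp add: sum.If_cases Int_def)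
  qed
  finally show ?thesis by simp
qed

lemma sum_q1_sq:
  assumes "2 \<le> m"
  shows "(\<Sum>S\<in>Sm n m. real (q1 S)^2) = real k * real ((n - 2) choose (m - 1)) + real k * (real k - 1) * real ((n - 4) choose (m - 2))"
proof -
  define P where "P = (\<lambda>i S. u i \<in> S \<and> v i \<notin> S)"
  have "(\<Sum>S\<in>Sm n m. real (q1 S)^2) = (\<Sum>S\<in>Sm n m. \<Sum>i<k. \<Sum>j<k. if P i S \<and> P j S then 1 else 0)"
  proof (rule sum.cong[OF refl])
    fix S
    have "real (q1 S)^2 = (\<Sum>i<k. if P i S then 1 else 0) * (\<Sum>j<k. if P j S then 1 else 0)"
      unfolding q1_sum_ind P_def by (simp add: power2_eq_square)
    also have "\<dots> = (\<Sum>i<k. \<Sum>j<k. (if P i S then 1 else 0) * (if P j S then 1 else 0))"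
      by (simp add: sum_product)
    also have "\<dots> = (\<Sum>i<k. \<Sum>j<k. if P i S \<and> P j S then 1 else 0)"
      by (intro sum.cong refl) simp
    finally show "real (q1 S)^2 = (\<Sum>i<k. \<Sum>j<k. if P i S \<and> P j S then 1 else 0)" .
  qed
  also have "\<dots> = (\<Sum>i<k. \<Sum>S\<in>Sm n m. \<Sum>j<k. if P i S \<and> P j S then 1 else 0)"
    by (rule sum.swap)
  also have "\<dots> = (\<Sum>i<k. \<Sum>j<k. \<Sum>S\<in>Sm n m. if P i S \<and> P j S then 1 else 0)"
    by (rule sum.cong[OF refl], rule sum.swap)
  also have "\<dots> = (\<Sum>i<k. \<Sum>j<k. if i = j then real ((n - 2) choose (m - 1)) else real ((n - 4) choose (m - 2)))"
  proof (intro sum.cong refl)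
    fix i j assume ij: "i \<in> {..<k}" "j \<in> {..<k}"
    have eq: "(\<Sum>S\<in>Sm n m. if P i S \<and> P j S then 1 else 0) = real (card {S\<in>Sm n m. P i S \<and> P j S})"
      using finite_Sm by (simp add: sum.If_cases Int_def)
    show "(\<Sum>S\<in>Sm n m. if P i S \<and> P j S then 1 else 0) = (if i = j then real ((n - 2) choose (m - 1)) else real ((n - 4) choose (m - 2)))"
    proof (cases "i = j")
      case True
      have "{S\<in>Sm n m. P i S \<and> P j S} = {S\<in>Sm n m. u i \<in> S \<and> v i \<notin> S}"
        using True unfolding P_def by auto
      then show ?thesis unfolding eq using count1[of i] ij assms True by simp
    next
      case False
      have "{S\<in>Sm n m. P i S \<and> P j S} = {S\<in>Sm n m. (u i \<in> S \<and> v i \<notin> S) \<and> (u j \<in> S \<and> v j \<notin> S)}"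
        unfolding P_def by simp
      then show ?thesis unfolding eq using count2[of i j] ij assms False by simp
    qed
  qed
  also have "\<dots> = (\<Sum>i<k. real ((n - 2) choose (m - 1)) + (real k - 1) * real ((n - 4) choose (m - 2)))"
  proof (rule sum.cong[OF refl])
    fix i assume i: "i \<in> {..<k}"
    have "(\<Sum>j<k. if i = j then real ((n - 2) choose (m - 1)) else real ((n - 4) choose (m - 2)))
        = (\<Sum>j<k. real ((n - 4) choose (m - 2)) + (if j = i then real ((n - 2) choose (m - 1)) - real ((n - 4) choose (m - 2)) else 0))"
      by (intro sum.cong refl) auto
    also have "\<dots> = real k * real ((n - 4) choose (m - 2)) + (real ((n - 2) choose (m - 1)) - real ((n - 4) choose (m - 2)))"
      using i by (simp add: sum.distrib)
    finally show "(\<Sum>j<k. if i = j then real ((n - 2) choose (m - 1)) else real ((n - 4) choose (m - 2))) = real ((n - 2) choose (m - 1)) + (real k - 1) * real ((n - 4) choose (m - 2))"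
      by (simp add: algebra_simps)
  qed
  also have "\<dots> = real k * real ((n - 2) choose (m - 1)) + real k * (real k - 1) * real ((n - 4) choose (m - 2))"
    by (simp add: algebra_simps)
  finally show ?thesis .
qed

end

lemma ratio1:
  assumes "1 \<le> m" "m < n"
  shows "((n - 2) choose (m - 1)) * (n * (n - 1)) = (n choose m) * (m * (n - m))"
proof -
  have a: "(n - m) * (n choose m) = n * ((n - 1) choose m)" by (rule binomial_absorb_comp)
  have b: "m * ((n - 1) choose m) = (n - 1) * ((n - 1 - 1) choose (m - 1))"
    using times_binomial_minus1_eq[of m "n - 1"] assms by simp
  have "n - 1 - 1 = n - 2" by simp
  then have "(n choose m) * (m * (n - m)) = m * (n * ((n - 1) choose m))" using a by (metis mult.assoc mult.commute)
  also have "\<dots> = n * (m * ((n - 1) choose m))" by simp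
  also have "\<dots> = n * ((n - 1) * ((n - 2) choose (m - 1)))" using b \<open>n - 1 - 1 = n - 2\<close> by simp
  finally show ?thesis by simp
qed

lemma pointwise:
  fixes q q1 :: nat and \<mu> :: real
  assumes "q1 \<le> q" "\<mu> > 0"
  shows "3 * real (q choose (q div 2)) / 2 ^ q \<le> 3 * sqrt 2 / sqrt \<mu> + 12 * (real q1 - \<mu>)^2 / \<mu>^2"
proof -
  have "3 * real (q choose (q div 2)) / 2 ^ q \<le> 3 * (1 / sqrt (real q + 1))"
  proof -
    have "real (q choose (q div 2)) / 2 ^ q \<le> 1 / sqrt (real q + 1)"
      using central_sqrt[of q] by (simp add: add.commute)
    then show ?thesis by simp
  qed
  also have "\<dots> \<le> 3 / sqrt (real q1 + 1)"
    using assms(1) by (simp add: divide_simps)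
  finally have A: "3 * real (q choose (q div 2)) / 2 ^ q \<le> 3 / sqrt (real q1 + 1)" .
  have nn1: "0 \<le> 3 * sqrt 2 / sqrt \<mu>" using assms(2) by simp
  have nn2: "0 \<le> 12 * (real q1 - \<mu>)^2 / \<mu>^2" by simp
  show ?thesis
  proof (cases "real q1 \<ge> \<mu> / 2")
    case True
    have "sqrt (\<mu> / 2) \<le> sqrt (real q1 + 1)" using True by simp
    moreover have "sqrt (\<mu> / 2) > 0" using assms by simp
    ultimately have "3 / sqrt (real q1 + 1) \<le> 3 / sqrt (\<mu> / 2)"
      by (intro divide_left_mono) auto
    also have "\<dots> = 3 * sqrt 2 / sqrt \<mu>"
      by (simp add: real_sqrt_divide field_simps)
    finally show ?thesis using A nn2 by linarith
  next
    case False
    then have "\<mu> - real q1 > \<mu> / 2" by simp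
    then have h: "(\<mu>/2)^2 < (\<mu> - real q1)^2"
      using assms by (intro power_strict_mono) auto
    have h2: "(real q1 - \<mu>)^2 = (\<mu> - real q1)^2" by (rule power2_commute)
    have "12 * (real q1 - \<mu>)^2 / \<mu>^2 \<ge> 12 * (\<mu>/2)^2 / \<mu>^2"
      using h h2 assms by (intro divide_right_mono) auto
    also have "12 * (\<mu>/2)^2 / \<mu>^2 = 3" using assms by (simp add: power2_eq_square field_simps)
    finally have B: "12 * (real q1 - \<mu>)^2 / \<mu>^2 \<ge> 3" .
    have "sqrt (real q1 + 1) \<ge> 1" by simp
    then have "3 / sqrt (real q1 + 1) \<le> 3" by (simp add: divide_simps)
    then show ?thesis using A B nn1 by linarith
  qed
qed

lemma var_arith:
  fixes p p' n k :: real
  assumes p0: "0 \<le> p" and p1: "p \<le> 1" and pp0: "0 \<le> p'"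
    and pp: "p' * ((n - 2) * (n - 3)) \<le> p^2 * (n * (n - 1))" and n6: "n \<ge> 6" and k0: "k \<ge> 0"
  shows "k * p + k * (k - 1) * p' - k^2 * p^2 \<le> k + 16 * k^2 / n"
proof -
  have d: "(n - 2) * (n - 3) > 0" using n6 by simp
  have "p' \<le> p^2 * (n * (n - 1)) / ((n - 2) * (n - 3))" using pp d by (simp add: field_simps)
  then have "p' - p^2 \<le> p^2 * ((n * (n - 1)) / ((n - 2) * (n - 3)) - 1)" by (simp add: algebra_simps)
  also have "(n * (n - 1)) / ((n - 2) * (n - 3)) - 1 = (4 * n - 6) / ((n - 2) * (n - 3))"
    using d by (simp add: field_simps)
  also have "p^2 * ((4 * n - 6) / ((n - 2) * (n - 3))) \<le> 1 * ((4 * n - 6) / ((n - 2) * (n - 3)))"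
  proof (rule mult_right_mono)
    show "p^2 \<le> 1" using p0 p1 by (simp add: power_le_one)
    show "0 \<le> (4 * n - 6) / ((n - 2) * (n - 3))" using d n6 by simp
  qed
  also have "(4 * n - 6) / ((n - 2) * (n - 3)) \<le> 16 / n"
  proof -
    have e: "16 * ((n - 2) * (n - 3)) - (4 * n - 6) * n = (n - 6) * (12 * n - 2) + 84" by (simp add: algebra_simps)
    have "(n - 6) * (12 * n - 2) \<ge> 0" using n6 by simp
    then have "(4 * n - 6) * n \<le> 16 * ((n - 2) * (n - 3))" using e by linarith
    then show ?thesis using d n6 by (simp add: field_simps)
  qed
  finally have D: "p' - p^2 \<le> 16 / n" by simp
  have "k * (k - 1) * p' \<le> k^2 * p'" using k0 pp0 by (simp add: power2_eq_square algebra_simps)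
  then have "k * p + k * (k - 1) * p' - k^2 * p^2 \<le> k * p + k^2 * (p' - p^2)" by (simp add: algebra_simps)
  also have "\<dots> \<le> k * 1 + k^2 * (16 / n)"
    using D p1 k0 by (intro add_mono mult_left_mono) auto
  finally show ?thesis by (simp add: mult.commute)
qed

context pairs
begin

lemma card_Sm: "card (Sm n' m) = n' choose m"
proof -
  have "card {B. B \<subseteq> {..<n'} \<and> card B = m} = card {..<n'} choose m" by (rule n_subsets) simp
  then show ?thesis unfolding Sm_def by simp
qed

lemma comb_main:
  fixes a :: "nat \<Rightarrow> real"
  assumes dr: "\<forall>i<k. \<bar>a (v i) - a (u i)\<bar> \<ge> r" and r: "r > 0"
    and m2: "2 \<le> m" and nm: "m + 2 \<le> n" and n6: "6 \<le> n"
    and mu: "\<mu> = real k * real ((n-2) choose (m-1)) / real (n choose m)" and mupos: "\<mu> > 0"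
  shows "real (card {S\<in>Sm n m. \<bar>sum a S - z\<bar> \<le> r})
    \<le> real (n choose m) * (3 * sqrt 2 / sqrt \<mu> + 12 * (real k + 16 * real k^2 / real n) / \<mu>^2)"
proof -
  define N where "N = real (n choose m)"
  define c2 where "c2 = real ((n-2) choose (m-1))"
  define c4 where "c4 = real ((n-4) choose (m-2))"
  have Npos: "N > 0" unfolding N_def using nm by simp
  have NS: "real (card (Sm n m)) = N" unfolding N_def card_Sm ..
  have R1n: "((n - 2) choose (m - 1)) * (n * (n - 1)) = (n choose m) * (m * (n - m))"
    by (rule ratio1) (use m2 nm in auto)
  have R2n: "((n - 2 - 2) choose (m - 1 - 1)) * ((n - 2) * (n - 2 - 1)) = ((n - 2) choose (m - 1)) * ((m - 1) * (n - 2 - (m - 1)))"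
    by (rule ratio1) (use m2 nm in auto)
  have R1: "c2 * (real n * (real n - 1)) = N * (real m * (real n - real m))"
  proof -
    have "real (((n - 2) choose (m - 1)) * (n * (n - 1))) = real ((n choose m) * (m * (n - m)))" using R1n by simp
    then show ?thesis unfolding c2_def N_def using nm by (simp add: of_nat_diff)
  qed
  have R2: "c4 * ((real n - 2) * (real n - 3)) = c2 * ((real m - 1) * (real n - real m - 1))"
  proof -
    have e1: "n - 2 - 2 = n - 4" "m - 1 - 1 = m - 2" "n - 2 - 1 = n - 3" "n - 2 - (m - 1) = n - m - 1" using nm m2 by auto
    have "real (((n - 4) choose (m - 2)) * ((n - 2) * (n - 3))) = real (((n - 2) choose (m - 1)) * ((m - 1) * (n - m - 1)))"
      using R2n unfolding e1 by simp
    then show ?thesis unfolding c2_def c4_def using nm m2 by (simp add: of_nat_diff)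
  qed
  define p where "p = c2 / N"
  define p' where "p' = c4 / N"
  have mup: "\<mu> = real k * p" unfolding mu p_def c2_def N_def by simp
  have p0: "0 \<le> p" unfolding p_def c2_def using Npos by simp
  have pp0: "0 \<le> p'" unfolding p'_def c4_def using Npos by simp
  have p1: "p \<le> 1"
  proof -
    have "real m * (real n - real m) \<le> real n * (real n - 1)"
    proof -
      have "real m \<le> real n - 1" using nm by simp
      moreover have "real n - real m \<le> real n" by simp
      moreover have "real n - real m \<ge> 0" using nm by simp
      ultimately show ?thesis using m2 by (intro mult_mono) auto
    qed
    then have "N * (real m * (real n - real m)) \<le> N * (real n * (real n - 1))" using Npos by simp
    then have "c2 * (real n * (real n - 1)) \<le> N * (real n * (real n - 1))" using R1 by simp
    moreover have "real n * (real n - 1) > 0" using n6 by simp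
    ultimately have "c2 \<le> N" by (rule mult_right_le_imp_le)
    then show ?thesis unfolding p_def using Npos by simp
  qed
  have ppb: "p' * ((real n - 2) * (real n - 3)) \<le> p^2 * (real n * (real n - 1))"
  proof -
    have "p' * ((real n - 2) * (real n - 3)) = c2 * ((real m - 1) * (real n - real m - 1)) / N"
      unfolding p'_def using R2 by simp
    also have "\<dots> \<le> c2 * (real m * (real n - real m)) / N"
    proof -
      have "(real m - 1) * (real n - real m - 1) \<le> real m * (real n - real m)"
        using m2 nm by (intro mult_mono) auto
      then show ?thesis using Npos unfolding c2_def by (intro divide_right_mono mult_left_mono) auto
    qed
    also have "\<dots> = c2 * (c2 * (real n * (real n - 1)) / N) / N" using R1 Npos by simp
    also have "\<dots> = p^2 * (real n * (real n - 1))" unfolding p_def by (simp add: power2_eq_square)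
    finally show ?thesis .
  qed
  have V: "real k * p + real k * (real k - 1) * p' - real k^2 * p^2 \<le> real k + 16 * real k^2 / real n"
    by (rule var_arith[OF p0 p1 pp0 ppb]) (use n6 in auto)
  have sq1: "(\<Sum>S\<in>Sm n m. real (q1 S)) = N * \<mu>"
    using sum_q1[of m] m2 nm unfolding mu N_def using Npos by simp
  have sq2: "(\<Sum>S\<in>Sm n m. real (q1 S)^2) = real k * c2 + real k * (real k - 1) * c4"
    using sum_q1_sq[OF m2] unfolding c2_def c4_def .
  have VS: "(\<Sum>S\<in>Sm n m. (real (q1 S) - \<mu>)^2) \<le> N * (real k + 16 * real k^2 / real n)"
  proof -
    have "(\<Sum>S\<in>Sm n m. (real (q1 S) - \<mu>)^2) = (\<Sum>S\<in>Sm n m. real (q1 S)^2 - 2 * \<mu> * real (q1 S) + \<mu>^2)"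
      by (intro sum.cong refl) (simp add: power2_eq_square algebra_simps)
    also have "\<dots> = (\<Sum>S\<in>Sm n m. real (q1 S)^2) - 2 * \<mu> * (\<Sum>S\<in>Sm n m. real (q1 S)) + N * \<mu>^2"
      using NS by (simp add: sum.distrib sum_subtractf sum_distrib_left)
    also have "\<dots> = N * (real k * p + real k * (real k - 1) * p' - real k^2 * p^2)"
      unfolding sq1 sq2 mup p_def p'_def using Npos by (simp add: field_simps power2_eq_square)
    also have "\<dots> \<le> N * (real k + 16 * real k^2 / real n)"
      using V Npos by (intro mult_left_mono) auto
    finally show ?thesis .
  qed
  have "real (card {S\<in>Sm n m. \<bar>sum a S - z\<bar> \<le> r})
      \<le> (\<Sum>S\<in>Sm n m. 3 * real (card (Qs S) choose (card (Qs S) div 2)) / 2 ^ card (Qs S))"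
    by (rule F_bound[OF dr r])
  also have "\<dots> \<le> (\<Sum>S\<in>Sm n m. 3 * sqrt 2 / sqrt \<mu> + 12 * (real (q1 S) - \<mu>)^2 / \<mu>^2)"
    by (intro sum_mono pointwise q1_le mupos)
  also have "\<dots> = N * (3 * sqrt 2 / sqrt \<mu>) + 12 / \<mu>^2 * (\<Sum>S\<in>Sm n m. (real (q1 S) - \<mu>)^2)"
    using NS by (simp add: sum.distrib sum_distrib_left)
  also have "\<dots> \<le> N * (3 * sqrt 2 / sqrt \<mu>) + 12 / \<mu>^2 * (N * (real k + 16 * real k^2 / real n))"
    using VS mupos by (intro add_left_mono mult_left_mono) auto
  also have "\<dots> = N * (3 * sqrt 2 / sqrt \<mu> + 12 * (real k + 16 * real k^2 / real n) / \<mu>^2)"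
    by (simp add: algebra_simps add_divide_distrib)
  finally show ?thesis unfolding N_def .
qed

end

lemma card_Sm': "card (Sm n m) = n choose m"
proof -
  have "card {B. B \<subseteq> {..<n} \<and> card B = m} = card {..<n} choose m" by (rule n_subsets) simp
  then show ?thesis unfolding Sm_def by simp
qed

definition ind01 :: "nat set \<Rightarrow> nat \<Rightarrow> real" where
  "ind01 S i = (if i \<in> S then 1 else 0)"

lemma ind01_inj: "inj ind01"
proof (rule injI)
  fix S T assume "ind01 S = ind01 T"
  then have "\<forall>i. ind01 S i = ind01 T i" by simp
  then show "S = T" unfolding ind01_def by (metis one_neq_zero set_eqI)
qed

lemma sum_ind01: "S \<subseteq> {..<n} \<Longrightarrow> (\<Sum>i<n. ind01 S i) = real (card S)"
proof -
  assume S: "S \<subseteq> {..<n}"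
  have "(\<Sum>i<n. ind01 S i) = real (card ({..<n} \<inter> S))" unfolding ind01_def by (simp add: sum.If_cases)
  moreover have "{..<n} \<inter> S = S" using S by blast
  ultimately show ?thesis by simp
qed

lemma sum_a_ind01: "S \<subseteq> {..<n} \<Longrightarrow> (\<Sum>i<n. a i * ind01 S i) = sum a S"
proof -
  assume S: "S \<subseteq> {..<n}"
  have "(\<Sum>i<n. a i * ind01 S i) = (\<Sum>i<n. if i \<in> S then a i else 0)" unfolding ind01_def by (intro sum.cong) auto
  also have "\<dots> = (\<Sum>i\<in>{..<n} \<inter> S. a i)" by (simp add: sum.inter_restrict)
  finally have "(\<Sum>i<n. a i * ind01 S i) = (\<Sum>i\<in>{..<n} \<inter> S. a i)" .
  moreover have "{..<n} \<inter> S = S" using S by blast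
  ultimately show ?thesis by simp
qed

lemma slice_eq: "slice01 n m = ind01 ` Sm n m"
proof
  show "ind01 ` Sm n m \<subseteq> slice01 n m"
  proof
    fix b assume "b \<in> ind01 ` Sm n m"
    then obtain S where S: "S \<in> Sm n m" "b = ind01 S" by blast
    have "(\<Sum>i<n. b i) = real m" using S sum_ind01[of S n] unfolding Sm_def by simp
    moreover have "\<forall>i\<ge>n. b i = 0" using S unfolding Sm_def ind01_def by auto
    moreover have "\<forall>i<n. b i = 0 \<or> b i = 1" using S unfolding ind01_def by auto
    ultimately show "b \<in> slice01 n m" unfolding slice01_def by blast
  qed
  show "slice01 n m \<subseteq> ind01 ` Sm n m"
  proof
    fix b assume b: "b \<in> slice01 n m"
    define S where "S = {i. i < n \<and> b i = 1}"
    have bS: "b = ind01 S"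
    proof
      fix i show "b i = ind01 S i"
        using b unfolding slice01_def S_def ind01_def by (cases "i < n") auto
    qed
    have Sn: "S \<subseteq> {..<n}" unfolding S_def by auto
    have "real (card S) = real m" using b sum_ind01[OF Sn] bS unfolding slice01_def by simp
    then have "S \<in> Sm n m" using Sn unfolding Sm_def by simp
    then show "b \<in> ind01 ` Sm n m" using bS by blast
  qed
qed

lemma prob_eq:
  assumes "m \<le> n"
  shows "measure_pmf.prob (map_pmf (\<lambda>b. \<Sum>i<n. a i * b i) (pmf_of_set (slice01 n m))) {x. \<bar>x - z\<bar> \<le> r}
    = real (card {S\<in>Sm n m. \<bar>sum a S - z\<bar> \<le> r}) / real (n choose m)"
proof -
  have ne: "slice01 n m \<noteq> {}"
  proof -
    have "{..<m} \<in> Sm n m" unfolding Sm_def using assms by auto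
    then show ?thesis unfolding slice_eq by blast
  qed
  have fin: "finite (slice01 n m)" unfolding slice_eq using finite_Sm by simp
  have cs: "card (slice01 n m) = n choose m"
    unfolding slice_eq using card_image[OF inj_on_subset[OF ind01_inj]] card_Sm' by simp
  define f where "f = (\<lambda>b::nat\<Rightarrow>real. \<Sum>i<n. a i * b i)"
  have int: "slice01 n m \<inter> f -` {x. \<bar>x - z\<bar> \<le> r} = ind01 ` {S\<in>Sm n m. \<bar>sum a S - z\<bar> \<le> r}"
  proof
    show "slice01 n m \<inter> f -` {x. \<bar>x - z\<bar> \<le> r} \<subseteq> ind01 ` {S\<in>Sm n m. \<bar>sum a S - z\<bar> \<le> r}"
    proof
      fix b assume "b \<in> slice01 n m \<inter> f -` {x. \<bar>x - z\<bar> \<le> r}"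
      then obtain S where S: "S \<in> Sm n m" "b = ind01 S" "\<bar>f b - z\<bar> \<le> r" unfolding slice_eq by blast
      have "f b = sum a S" unfolding f_def S(2) using sum_a_ind01[of S n a] S(1) unfolding Sm_def by simp
      then show "b \<in> ind01 ` {S\<in>Sm n m. \<bar>sum a S - z\<bar> \<le> r}" using S by auto
    qed
    show "ind01 ` {S\<in>Sm n m. \<bar>sum a S - z\<bar> \<le> r} \<subseteq> slice01 n m \<inter> f -` {x. \<bar>x - z\<bar> \<le> r}"
    proof
      fix b assume "b \<in> ind01 ` {S\<in>Sm n m. \<bar>sum a S - z\<bar> \<le> r}"
      then obtain S where S: "S \<in> Sm n m" "b = ind01 S" "\<bar>sum a S - z\<bar> \<le> r" by blast
      have "f b = sum a S" unfolding f_def S(2) using sum_a_ind01[of S n a] S(1) unfolding Sm_def by simp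
      then show "b \<in> slice01 n m \<inter> f -` {x. \<bar>x - z\<bar> \<le> r}" using S unfolding slice_eq by auto
    qed
  qed
  have ci: "card (ind01 ` {S\<in>Sm n m. \<bar>sum a S - z\<bar> \<le> r}) = card {S\<in>Sm n m. \<bar>sum a S - z\<bar> \<le> r}"
    using card_image[OF inj_on_subset[OF ind01_inj]] by simp
  have "measure_pmf.prob (map_pmf f (pmf_of_set (slice01 n m))) {x. \<bar>x - z\<bar> \<le> r}
      = measure_pmf.prob (pmf_of_set (slice01 n m)) (f -` {x. \<bar>x - z\<bar> \<le> r})" by simp
  also have "\<dots> = real (card (slice01 n m \<inter> f -` {x. \<bar>x - z\<bar> \<le> r})) / real (card (slice01 n m))"
    by (rule measure_pmf_of_set[OF ne fin])
  also have "\<dots> = real (card {S\<in>Sm n m. \<bar>sum a S - z\<bar> \<le> r}) / real (n choose m)"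
    unfolding int ci cs ..
  finally show ?thesis unfolding f_def .
qed

lemma final_arith:
  fixes \<mu> c0 n k :: real
  assumes mu: "\<mu> \<ge> c0 * n" and c0: "c0 > 0" and n1: "n \<ge> 1" and k0: "0 \<le> k" and kn: "k \<le> n"
  shows "3 * sqrt 2 / sqrt \<mu> + 12 * (k + 16 * k^2 / n) / \<mu>^2 \<le> (3 * sqrt 2 / sqrt c0 + 204 / c0^2) / sqrt n"
proof -
  have np: "n > 0" using n1 by simp
  have cn: "c0 * n > 0" using c0 np by simp
  have mupos: "\<mu> > 0" using mu cn by linarith
  have A: "3 * sqrt 2 / sqrt \<mu> \<le> 3 * sqrt 2 / sqrt c0 / sqrt n"
  proof -
    have "sqrt (c0 * n) \<le> sqrt \<mu>" using mu by simp
    moreover have "sqrt (c0 * n) > 0" using cn by simp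
    ultimately have "3 * sqrt 2 / sqrt \<mu> \<le> 3 * sqrt 2 / sqrt (c0 * n)"
      by (intro divide_left_mono) auto
    also have "\<dots> = 3 * sqrt 2 / sqrt c0 / sqrt n" by (simp add: real_sqrt_mult)
    finally show ?thesis .
  qed
  have k1: "k^2 / n \<le> n"
  proof -
    have "k^2 \<le> n^2" using k0 kn by (simp add: power_mono)
    then show ?thesis using np by (simp add: divide_simps power2_eq_square)
  qed
  have e16: "16 * k^2 / n = 16 * (k^2 / n)" by simp
  have B1: "12 * (k + 16 * k^2 / n) \<le> 204 * n"
  proof -
    define x where "x = k^2 / n"
    have "x \<le> n" using k1 unfolding x_def .
    then have "12 * (k + 16 * x) \<le> 204 * n" using kn by simp
    then show ?thesis unfolding e16 x_def .
  qed
  have B2: "(c0 * n)^2 \<le> \<mu>^2" using mu cn by (intro power_mono) auto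
  have "12 * (k + 16 * k^2 / n) / \<mu>^2 \<le> 204 * n / (c0 * n)^2"
  proof (rule frac_le)
    show "0 \<le> 204 * n" using np by simp
    show "12 * (k + 16 * k^2 / n) \<le> 204 * n" by (rule B1)
    show "0 < (c0 * n)^2" using c0 np by simp
    show "(c0 * n)^2 \<le> \<mu>^2" by (rule B2)
  qed
  also have "204 * n / (c0 * n)^2 = 204 / c0^2 / n" using np c0 by (simp add: power2_eq_square field_simps)
  also have "\<dots> \<le> 204 / c0^2 / sqrt n"
  proof (rule divide_left_mono)
    have "n \<le> n^2" using n1 by (simp add: power2_eq_square)
    then have "sqrt n \<le> sqrt (n^2)" by (rule real_sqrt_le_mono)
    then show "sqrt n \<le> n" using np by simp
  qed (use np c0 in auto)
  finally have B: "12 * (k + 16 * k^2 / n) / \<mu>^2 \<le> 204 / c0^2 / sqrt n" .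
  show ?thesis using A B by (simp add: add_divide_distrib)
qed

theorem lemma3p6:
  fixes \<sigma> lam :: real
  assumes "0 < \<sigma>" "\<sigma> < 1/3" "0 < lam" "lam < 1/3"
  shows "\<exists>C::real. \<forall>(r::real) (n::nat) (a::nat \<Rightarrow> real) (I1::nat set) (I2::nat set) (m::nat).
    r > 0 \<longrightarrow> n \<ge> 1 \<longrightarrow>
    I1 \<subseteq> {..<n} \<longrightarrow> I2 \<subseteq> {..<n} \<longrightarrow> I1 \<inter> I2 = {} \<longrightarrow>
    real (card I1) \<ge> \<sigma> * real n \<longrightarrow> real (card I2) \<ge> \<sigma> * real n \<longrightarrow>
    (\<forall>i\<in>I1. \<forall>j\<in>I2. \<bar>a i - a j\<bar> \<ge> r) \<longrightarrow>
    lam * real n \<le> real m \<longrightarrow> real m \<le> (1 - lam) * real n \<longrightarrow>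
    levy_conc (map_pmf (\<lambda>b. \<Sum>i<n. a i * b i) (pmf_of_set (slice01 n m))) r
      \<le> C / sqrt (real n)"
proof -
  have sig: "\<sigma> > 0" and lam0: "lam > 0" and lam1: "lam < 1/3" using assms by auto
  define c0 where "c0 = \<sigma> * lam^2"
  have c0pos: "c0 > 0" unfolding c0_def using sig lam0 by simp
  define C1 where "C1 = 3 * sqrt 2 / sqrt c0 + 204 / c0^2"
  define N0 where "N0 = 6 + 2 / lam"
  define C where "C = C1 + sqrt N0"
  have C1pos: "C1 \<ge> 0" unfolding C1_def using c0pos by simp
  show ?thesis
  proof (rule exI[of _ C], intro allI impI)
    fix r :: real and n :: nat and a :: "nat \<Rightarrow> real" and I1 I2 :: "nat set" and m :: nat
    assume r: "r > 0" and n1: "n \<ge> 1" and I1n: "I1 \<subseteq> {..<n}" and I2n: "I2 \<subseteq> {..<n}"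
      and dis: "I1 \<inter> I2 = {}" and cI1: "real (card I1) \<ge> \<sigma> * real n" and cI2: "real (card I2) \<ge> \<sigma> * real n"
      and sep: "\<forall>i\<in>I1. \<forall>j\<in>I2. \<bar>a i - a j\<bar> \<ge> r"
      and ml: "lam * real n \<le> real m" and mu: "real m \<le> (1 - lam) * real n"
    have np: "real n > 0" using n1 by simp
    have mn: "m \<le> n"
    proof -
      have "(1 - lam) * real n \<le> real n" using lam0 np by (simp add: algebra_simps)
      then show ?thesis using mu by linarith
    qed
    have key: "measure_pmf.prob (map_pmf (\<lambda>b. \<Sum>i<n. a i * b i) (pmf_of_set (slice01 n m))) {x. \<bar>x - z\<bar> \<le> r}
        \<le> C / sqrt (real n)" for z
    proof -
      define F where "F = {S\<in>Sm n m. \<bar>sum a S - z\<bar> \<le> r}"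
      have Npos: "real (n choose m) > 0" using mn by simp
      have P: "measure_pmf.prob (map_pmf (\<lambda>b. \<Sum>i<n. a i * b i) (pmf_of_set (slice01 n m))) {x. \<bar>x - z\<bar> \<le> r}
          = real (card F) / real (n choose m)" unfolding F_def by (rule prob_eq[OF mn])
      have FN: "card F \<le> n choose m"
      proof -
        have "card F \<le> card (Sm n m)" unfolding F_def using finite_Sm by (intro card_mono) auto
        then show ?thesis using card_Sm' by simp
      qed
      show ?thesis
      proof (cases "real n < N0")
        case True
        have "real (card F) / real (n choose m) \<le> 1" using FN Npos by simp
        also have "1 \<le> C / sqrt (real n)"
        proof -
          have "sqrt (real n) < sqrt N0" using True by simp
          also have "sqrt N0 \<le> C" unfolding C_def using C1pos by simp
          finally show ?thesis using np by simp
        qed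
        finally show ?thesis unfolding P .
      next
        case False
        then have nN0: "real n \<ge> 6 + 2 / lam" unfolding N0_def by simp
        have n6: "6 \<le> n"
        proof -
          have "2 / lam \<ge> 0" using lam0 by simp
          then have "real n \<ge> 6" using nN0 by linarith
          then show ?thesis by simp
        qed
        have lamn: "lam * real n \<ge> 2"
        proof -
          have "real n \<ge> 2 / lam" using nN0 by simp
          then have "lam * real n \<ge> lam * (2 / lam)" using lam0 by (intro mult_left_mono) auto
          then show ?thesis using lam0 by simp
        qed
        have m2: "2 \<le> m" using ml lamn by simp
        have nm: "m + 2 \<le> n"
        proof -
          have "real m \<le> real n - lam * real n" using mu by (simp add: algebra_simps)
          then have "real m + 2 \<le> real n" using lamn by linarith
          then show ?thesis by simp
        qed
        define k where "k = min (card I1) (card I2)"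
        have kI1: "k \<le> card I1" and kI2: "k \<le> card I2" unfolding k_def by auto
        have kge: "real k \<ge> \<sigma> * real n" unfolding k_def using cI1 cI2 by simp
        have fI1: "finite I1" using I1n finite_subset by blast
        have fI2: "finite I2" using I2n finite_subset by blast
        have kn: "k \<le> n"
        proof -
          have "card I1 \<le> card {..<n}" using I1n by (intro card_mono) auto
          then show ?thesis using kI1 by simp
        qed
        obtain u where u: "u ` {..<k} \<subseteq> I1" "inj_on u {..<k}"
          using card_le_inj[of "{..<k}" I1] fI1 kI1 by auto
        obtain v where v: "v ` {..<k} \<subseteq> I2" "inj_on v {..<k}"
          using card_le_inj[of "{..<k}" I2] fI2 kI2 by auto
        interpret pairs n k u v
        proof
          show "inj_on u {..<k}" by (rule u(2))
          show "inj_on v {..<k}" by (rule v(2))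
          show "u ` {..<k} \<inter> v ` {..<k} = {}" using u(1) v(1) dis by blast
          show "u ` {..<k} \<subseteq> {..<n}" using u(1) I1n by blast
          show "v ` {..<k} \<subseteq> {..<n}" using v(1) I2n by blast
        qed
        have dr: "\<forall>i<k. \<bar>a (v i) - a (u i)\<bar> \<ge> r"
        proof (intro allI impI)
          fix i assume "i < k"
          then have "u i \<in> I1" "v i \<in> I2" using u(1) v(1) by auto
          then have "\<bar>a (u i) - a (v i)\<bar> \<ge> r" using sep by blast
          then show "\<bar>a (v i) - a (u i)\<bar> \<ge> r" by (simp add: abs_minus_commute)
        qed
        define \<mu> where "\<mu> = real k * real ((n-2) choose (m-1)) / real (n choose m)"
        have R1n: "((n - 2) choose (m - 1)) * (n * (n - 1)) = (n choose m) * (m * (n - m))"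
          by (rule ratio1) (use m2 nm in auto)
        have pform: "real ((n-2) choose (m-1)) / real (n choose m) = real m * (real n - real m) / (real n * (real n - 1))"
        proof -
          have "real (((n - 2) choose (m - 1)) * (n * (n - 1))) = real ((n choose m) * (m * (n - m)))" using R1n by simp
          then have e: "real ((n - 2) choose (m - 1)) * (real n * (real n - 1)) = real (n choose m) * (real m * (real n - real m))"
            using nm by (simp add: of_nat_diff)
          have h3: "real n * (real n - 1) > 0" using n6 by simp
          have "real ((n-2) choose (m-1)) / real (n choose m) = (real ((n - 2) choose (m - 1)) * (real n * (real n - 1))) / (real (n choose m) * (real n * (real n - 1)))"
            using h3 n6 by simp
          also have "\<dots> = (real (n choose m) * (real m * (real n - real m))) / (real (n choose m) * (real n * (real n - 1)))"
            unfolding e ..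
          also have "\<dots> = real m * (real n - real m) / (real n * (real n - 1))" using Npos by simp
          finally show ?thesis .
        qed
        have pge: "real ((n-2) choose (m-1)) / real (n choose m) \<ge> lam^2"
        proof -
          have a1: "real n - real m \<ge> lam * real n" using mu by (simp add: algebra_simps)
          have "(lam * real n) * (lam * real n) \<le> real m * (real n - real m)"
            using ml a1 lam0 np by (intro mult_mono) auto
          then have h1: "lam^2 * (real n * real n) \<le> real m * (real n - real m)" by (simp add: power2_eq_square algebra_simps)
          have h2: "real n * (real n - 1) \<le> real n * real n" using np by simp
          have h3: "real n * (real n - 1) > 0" using n6 by simp
          have "lam^2 \<le> lam^2 * (real n * real n) / (real n * (real n - 1))"
          proof -
            have "lam^2 * (real n * (real n - 1)) \<le> lam^2 * (real n * real n)" using h2 by (intro mult_left_mono) auto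
            then show ?thesis using h3 by (simp add: field_simps)
          qed
          also have "\<dots> \<le> real m * (real n - real m) / (real n * (real n - 1))"
            using h1 h3 by (intro divide_right_mono) auto
          finally show ?thesis unfolding pform .
        qed
        have muge: "\<mu> \<ge> c0 * real n"
        proof -
          have "\<mu> = real k * (real ((n-2) choose (m-1)) / real (n choose m))" unfolding \<mu>_def by simp
          also have "\<dots> \<ge> (\<sigma> * real n) * lam^2" using kge pge sig np by (intro mult_mono) auto
          finally show ?thesis unfolding c0_def by (simp add: algebra_simps)
        qed
        have mupos: "\<mu> > 0"
        proof -
          have "c0 * real n > 0" using c0pos np by simp
          then show ?thesis using muge by linarith
        qed
        have CM: "real (card F) \<le> real (n choose m) * (3 * sqrt 2 / sqrt \<mu> + 12 * (real k + 16 * real k^2 / real n) / \<mu>^2)"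
          unfolding F_def by (rule comb_main[OF dr r m2 nm n6 \<mu>_def mupos])
        have FA: "3 * sqrt 2 / sqrt \<mu> + 12 * (real k + 16 * real k^2 / real n) / \<mu>^2 \<le> C1 / sqrt (real n)"
          unfolding C1_def by (rule final_arith[OF muge c0pos]) (use n1 kn in auto)
        have "real (card F) / real (n choose m) \<le> 3 * sqrt 2 / sqrt \<mu> + 12 * (real k + 16 * real k^2 / real n) / \<mu>^2"
          using divide_right_mono[OF CM, of "real (n choose m)"] Npos by simp
        also have "\<dots> \<le> C1 / sqrt (real n)" by (rule FA)
        also have "\<dots> \<le> C / sqrt (real n)" unfolding C_def N0_def using np lam0 by (intro divide_right_mono) auto
        finally show ?thesis unfolding P .
      qed
    qed
    show "levy_conc (map_pmf (\<lambda>b. \<Sum>i<n. a i * b i) (pmf_of_set (slice01 n m))) r \<le> C / sqrt (real n)"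
      unfolding levy_conc_def by (rule cSUP_least) (use key in auto)
  qed
qed

end
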